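(* Let $E$ be the face monoid of a simple polytope $P$, with set of facets $A$. Then $E$ has a monoid presentation with generators $a\in A$ and relations: $a^2=a$ for $a\in A$; $ab=ba$ for $a,b\in A$; and $a_1\cdots a_k=a_1\cdots a_kb$ for all $b\in A$ and all independent facets $a_1,\dots,a_k$ with $2\le k\le\dim P$ and $a_1\cap\cdots\cap a_k=\varnothing$.
   Context: The face monoid of a convex polytope $P$ is the set of its faces (including $P$ and $\varnothing$) with multiplication $f_1f_2=f_1\cap f_2$ (identity $P$); in the associated order (reverse inclusion) the atoms are the facets and the join is intersection. $P$ is simple if each vertex lies in exactly $\dim P$ facets. A set $S$ of facets is independent if $\bigcap(S\setminus\{s\})\supsetneq\bigcap S$ for every $s\in S$. *)

theory Defs
  imports "HOL-Analysis.Analysis"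
begin

text \<open>The face monoid of a polytope P: its faces (including P and the empty set),
  with product = intersection and identity P.\<close>
definition face_monoid :: "'a::euclidean_space set \<Rightarrow> 'a set set" where
  "face_monoid P = {F. F face_of P}"

definition facets :: "'a::euclidean_space set \<Rightarrow> 'a set set" where
  "facets P = {F. F facet_of P}"

definition simple_polytope :: "'a::euclidean_space set \<Rightarrow> bool" where
  "simple_polytope P \<longleftrightarrow> polytope P \<and>
     (\<forall>v. v extreme_point_of P \<longrightarrow> int (card {F. F facet_of P \<and> v \<in> F}) = aff_dim P)"

definition face_prod :: "'a::euclidean_space set \<Rightarrow> 'a set list \<Rightarrow> 'a set" where
  "face_prod P w = P \<inter> \<Inter>(set w)"

definition independent_facets :: "'a::euclidean_space set \<Rightarrow> 'a set set \<Rightarrow> bool" where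
  "independent_facets P S \<longleftrightarrow> S \<subseteq> facets P \<and>
     (\<forall>s\<in>S. P \<inter> \<Inter>(S - {s}) \<supset> P \<inter> \<Inter>S)"

inductive mon_cong :: "('g list \<times> 'g list) set \<Rightarrow> 'g list \<Rightarrow> 'g list \<Rightarrow> bool"
  for R where
  base: "(u, v) \<in> R \<Longrightarrow> mon_cong R u v"
| refl: "mon_cong R u u"
| sym: "mon_cong R u v \<Longrightarrow> mon_cong R v u"
| trans: "mon_cong R u v \<Longrightarrow> mon_cong R v w \<Longrightarrow> mon_cong R u w"
| compat: "mon_cong R u v \<Longrightarrow> mon_cong R (x @ u @ y) (x @ v @ y)"

definition has_presentation ::
  "'e set \<Rightarrow> ('e \<Rightarrow> 'e \<Rightarrow> 'e) \<Rightarrow> 'e \<Rightarrow> 'g set \<Rightarrow> ('g \<Rightarrow> 'e) \<Rightarrow> ('g list \<times> 'g list) set \<Rightarrow> bool"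
  where
  "has_presentation E mul e1 A g R \<longleftrightarrow>
     (let ev = (\<lambda>w. foldr (\<lambda>a x. mul (g a) x) w e1) in
       ev ` lists A = E \<and>
       (\<forall>u\<in>lists A. \<forall>v\<in>lists A. ev u = ev v \<longleftrightarrow> mon_cong R u v))"

definition facet_relations :: "'a::euclidean_space set \<Rightarrow> ('a set list \<times> 'a set list) set" where
  "facet_relations P =
     {([a, a], [a]) | a. a \<in> facets P}
   \<union> {([a, b], [b, a]) | a b. a \<in> facets P \<and> b \<in> facets P}
   \<union> {(as, as @ [b]) | as b. b \<in> facets P \<and> distinct as \<and> set as \<subseteq> facets P \<and>
        independent_facets P (set as) \<and> 2 \<le> length as \<and> int (length as) \<le> aff_dim P \<and>
        \<Inter>(set as) = {}}"

end

theory Submission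
  imports Defs
begin


lemma explicit_w:
  fixes S :: "'a :: euclidean_space set"
  assumes "finite F"
      and seq: "S = affine hull S \<inter> \<Inter>F"
      and faceq: "\<And>h. h \<in> F \<Longrightarrow> a h \<noteq> 0 \<and> h = {x. a h \<bullet> x \<le> b h}"
      and psub: "\<And>F'. F' \<subset> F \<Longrightarrow> S \<subset> affine hull S \<inter> \<Inter>F'"
      and ne: "S \<noteq> {}" and that: "h \<in> F"
    shows "\<exists>w\<in>S. a h \<bullet> w = b h \<and> (\<forall>i\<in>F. i \<noteq> h \<longrightarrow> a i \<bullet> w < b i)"
proof -
  have "polyhedron S"
    unfolding polyhedron_Int_affine by (metis \<open>finite F\<close> faceq seq)
  then have "convex S"
    by (rule polyhedron_imp_convex)
  with ne rel_interior_eq_empty have "rel_interior S \<noteq> {}" by blast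
  then obtain x where "x \<in> rel_interior S" by auto
  then obtain T where "open T" "x \<in> T" "x \<in> S" "T \<inter> affine hull S \<subseteq> S"
    by (force simp: mem_rel_interior)
  then have xaff: "x \<in> affine hull S" and xint: "x \<in> \<Inter>F"
    using seq hull_inc by auto
  have "rel_interior S = {x \<in> S. \<forall>h\<in>F. a h \<bullet> x < b h}"
    by (rule rel_interior_polyhedron_explicit [OF \<open>finite F\<close> seq faceq psub])
  with \<open>x \<in> rel_interior S\<close>
  have [simp]: "\<And>h. h\<in>F \<Longrightarrow> a h \<bullet> x < b h" by blast
    have "S \<subset> affine hull S \<inter> \<Inter>(F - {h})"
      using psub that by (metis Diff_disjoint Diff_subset insert_disjoint(2) psubsetI)
    then obtain z where zaff: "z \<in> affine hull S" and zint: "z \<in> \<Inter>(F - {h})" and "z \<notin> S"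
      by force
    then have "z \<noteq> x" "z \<notin> h" using seq \<open>x \<in> S\<close> by auto
    have "x \<in> h" using that xint by auto
    then have able: "a h \<bullet> x \<le> b h"
      using faceq that by blast
    also have "\<dots> < a h \<bullet> z" using \<open>z \<notin> h\<close> faceq [OF that] xint by auto
    finally have xltz: "a h \<bullet> x < a h \<bullet> z" .
    define l where "l = (b h - a h \<bullet> x) / (a h \<bullet> z - a h \<bullet> x)"
    define w where "w = (1 - l) *\<^sub>R x + l *\<^sub>R z"
    have "0 < l" "l < 1"
      using able xltz \<open>b h < a h \<bullet> z\<close> \<open>h \<in> F\<close>
      by (auto simp: l_def field_split_simps)
    have awlt: "a i \<bullet> w < b i" if "i \<in> F" "i \<noteq> h" for i
    proof -
      have "(1 - l) * (a i \<bullet> x) < (1 - l) * b i"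
        by (simp add: \<open>l < 1\<close> \<open>i \<in> F\<close>)
      moreover have "l * (a i \<bullet> z) \<le> l * b i"
      proof (rule mult_left_mono)
        show "a i \<bullet> z \<le> b i"
          by (metis DiffI Inter_iff empty_iff faceq insertE mem_Collect_eq that zint)
      qed (use \<open>0 < l\<close> in auto)
      ultimately show ?thesis by (simp add: w_def algebra_simps)
    qed
    have weq: "a h \<bullet> w = b h"
      using xltz unfolding w_def l_def
      by (simp add: algebra_simps) (simp add: field_simps)
    have "w \<in> affine hull S"
      by (simp add: w_def mem_affine xaff zaff)
    moreover have "w \<in> \<Inter>F"
      using \<open>a h \<bullet> w = b h\<close> awlt faceq less_eq_real_def by blast
    ultimately have "w \<in> S"
      using seq by blast
    then show ?thesis using weq awlt by blast
qed

lemma facet_repr: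
  fixes P :: "'a::euclidean_space set"
  assumes "polytope P"
  obtains \<alpha> \<beta> where
    "\<And>C. C facet_of P \<Longrightarrow> \<forall>x\<in>affine hull P. x + \<alpha> C \<in> affine hull P"
    "\<And>x. x \<in> P \<longleftrightarrow> x \<in> affine hull P \<and> (\<forall>C. C facet_of P \<longrightarrow> \<alpha> C \<bullet> x \<le> \<beta> C)"
    "\<And>C. C facet_of P \<Longrightarrow> C = P \<inter> {x. \<alpha> C \<bullet> x = \<beta> C}"
proof (cases "P = {}")
  case True
  then show ?thesis by (rule_tac that[of "\<lambda>C. 0" "\<lambda>C. 0"]) auto
next
  case ne: False
  have "polyhedron P" using assms polytope_imp_polyhedron by blast
  then obtain F where F: "finite F" "P = (affine hull P) \<inter> (\<Inter>F)"
     "\<forall>h \<in> F. \<exists>a b. a \<noteq> 0 \<and> h = {x. a \<bullet> x \<le> b} \<and>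
                             (\<forall>x \<in> affine hull P. (x + a) \<in> affine hull P)"
     and psub: "\<And>F'. F' \<subset> F \<Longrightarrow> P \<subset> (affine hull P) \<inter> (\<Inter>F')"
    unfolding polyhedron_Int_affine_parallel_minimal by blast
  then obtain a b where ab: "\<And>h. h \<in> F \<Longrightarrow> a h \<noteq> 0 \<and> h = {x. a h \<bullet> x \<le> b h} \<and>
                             (\<forall>x \<in> affine hull P. (x + a h) \<in> affine hull P)"
    by metis
  have faceq: "\<And>h. h \<in> F \<Longrightarrow> a h \<noteq> 0 \<and> h = {x. a h \<bullet> x \<le> b h}" using ab by blast
  note fe = facet_of_polyhedron_explicit[OF F(1) F(2) faceq psub]
  define hh where "hh C = (SOME h. h \<in> F \<and> C = P \<inter> {x. a h \<bullet> x = b h})" for C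
  have hh: "hh C \<in> F \<and> C = P \<inter> {x. a (hh C) \<bullet> x = b (hh C)}" if "C facet_of P" for C
    unfolding hh_def by (rule someI_ex) (use fe that in blast)
  have inj: "h1 = h2" if hF: "h1 \<in> F" "h2 \<in> F"
     "P \<inter> {x. a h1 \<bullet> x = b h1} = P \<inter> {x. a h2 \<bullet> x = b h2}" for h1 h2
  proof (rule ccontr)
    assume "h1 \<noteq> h2"
    obtain w where w: "w \<in> P" "a h1 \<bullet> w = b h1" "\<forall>i\<in>F. i \<noteq> h1 \<longrightarrow> a i \<bullet> w < b i"
      using explicit_w[OF F(1) F(2) faceq psub ne hF(1)] by blast
    then have "w \<in> P \<inter> {x. a h2 \<bullet> x = b h2}" using hF(3) by blast
    then have "a h2 \<bullet> w = b h2" by blast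
    with w hF(2) \<open>h1 \<noteq> h2\<close> show False by force
  qed
  show ?thesis
  proof (rule that[of "\<lambda>C. a (hh C)" "\<lambda>C. b (hh C)"])
    show "\<forall>x\<in>affine hull P. x + a (hh C) \<in> affine hull P" if "C facet_of P" for C
      using ab hh that by blast
    show "C = P \<inter> {x. a (hh C) \<bullet> x = b (hh C)}" if "C facet_of P" for C
      using hh that by blast
    show "x \<in> P \<longleftrightarrow> x \<in> affine hull P \<and> (\<forall>C. C facet_of P \<longrightarrow> a (hh C) \<bullet> x \<le> b (hh C))" for x
    proof
      assume x: "x \<in> P"
      then show "x \<in> affine hull P \<and> (\<forall>C. C facet_of P \<longrightarrow> a (hh C) \<bullet> x \<le> b (hh C))"
        using hh faceq F(2) by (auto intro: hull_inc) (metis (no_types, lifting) Int_iff Inter_iff mem_Collect_eq)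
    next
      assume x: "x \<in> affine hull P \<and> (\<forall>C. C facet_of P \<longrightarrow> a (hh C) \<bullet> x \<le> b (hh C))"
      have "x \<in> h" if "h \<in> F" for h
      proof -
        have C: "(P \<inter> {x. a h \<bullet> x = b h}) facet_of P" using fe that by blast
        have "hh (P \<inter> {x. a h \<bullet> x = b h}) = h"
          using inj[OF _ that] hh[OF C] by metis
        then show ?thesis using x C faceq that by force
      qed
      then show "x \<in> P" using F(2) x by blast
    qed
  qed
qed



locale spx =
  fixes P :: "'a::euclidean_space set" and \<alpha> :: "'a set \<Rightarrow> 'a" and \<beta> :: "'a set \<Rightarrow> real"
    and L :: "'a set" and d :: nat
  assumes poly: "polytope P"
  and simple: "\<And>v. v extreme_point_of P \<Longrightarrow> card {C. C facet_of P \<and> v \<in> C} = d"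
  and dpos: "1 \<le> d"
  and Lsub: "subspace L" and dimL: "dim L = d"
  and aff1: "\<And>x z. x \<in> affine hull P \<Longrightarrow> z \<in> affine hull P \<Longrightarrow> x - z \<in> L"
  and aff2: "\<And>x y. x \<in> affine hull P \<Longrightarrow> y \<in> L \<Longrightarrow> x + y \<in> affine hull P"
  and \<alpha>L: "\<And>C. C facet_of P \<Longrightarrow> \<alpha> C \<in> L"
  and repr: "\<And>x. x \<in> P \<longleftrightarrow> x \<in> affine hull P \<and> (\<forall>C. C facet_of P \<longrightarrow> \<alpha> C \<bullet> x \<le> \<beta> C)"
  and fac: "\<And>C. C facet_of P \<Longrightarrow> C = P \<inter> {x. \<alpha> C \<bullet> x = \<beta> C}"
begin

definition act where "act v = {C. C facet_of P \<and> v \<in> C}"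

lemma finF: "finite {C. C facet_of P}"
  using finite_polytope_facets[OF poly] .

lemma finact: "finite (act v)"
  unfolding act_def using finF by (rule rev_finite_subset) auto

lemma card_act: "v extreme_point_of P \<Longrightarrow> card (act v) = d"
  unfolding act_def by (rule simple)

lemma inP_le: "x \<in> P \<Longrightarrow> C facet_of P \<Longrightarrow> \<alpha> C \<bullet> x \<le> \<beta> C"
  using repr by blast

lemma onfacet: "C facet_of P \<Longrightarrow> x \<in> P \<Longrightarrow> x \<in> C \<longleftrightarrow> \<alpha> C \<bullet> x = \<beta> C"
  using fac by blast

lemma LspanL: "span L = L" using Lsub by simp

lemma feasible:
  assumes x: "x \<in> P" "y \<in> L" and cond: "\<And>C. C facet_of P \<Longrightarrow> x \<in> C \<Longrightarrow> \<alpha> C \<bullet> y \<le> 0"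
  shows "\<exists>T>0. \<forall>t. 0 < t \<longrightarrow> t < T \<longrightarrow> x + t *\<^sub>R y \<in> P"
proof -
  have ev: "\<forall>\<^sub>F t in at_right (0::real). \<forall>C\<in>{C. C facet_of P}. x \<notin> C \<longrightarrow> t * (\<alpha> C \<bullet> y) < \<beta> C - \<alpha> C \<bullet> x"
  proof (rule eventually_ball_finite[OF finF], rule ballI)
    fix C assume C: "C \<in> {C. C facet_of P}"
    then have C': "C facet_of P" by simp
    show "\<forall>\<^sub>F t in at_right 0. x \<notin> C \<longrightarrow> t * (\<alpha> C \<bullet> y) < \<beta> C - \<alpha> C \<bullet> x"
    proof (cases "x \<in> C")
      case True then show ?thesis by simp
    next
      case False
      have "\<alpha> C \<bullet> x \<le> \<beta> C" by (rule inP_le[OF x(1) C'])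
      moreover have "\<alpha> C \<bullet> x \<noteq> \<beta> C" using onfacet[OF C' x(1)] False by simp
      ultimately have pos: "0 < \<beta> C - \<alpha> C \<bullet> x" by simp
      have "((\<lambda>t::real. t * (\<alpha> C \<bullet> y)) \<longlongrightarrow> 0 * (\<alpha> C \<bullet> y)) (at_right 0)"
        by (intro tendsto_intros)
      then have "((\<lambda>t::real. t * (\<alpha> C \<bullet> y)) \<longlongrightarrow> 0) (at_right 0)" by simp
      from order_tendstoD(2)[OF this pos]
      have "\<forall>\<^sub>F t in at_right 0. t * (\<alpha> C \<bullet> y) < \<beta> C - \<alpha> C \<bullet> x" .
      then show ?thesis by (rule eventually_mono) simp
    qed
  qed
  then obtain T where T: "T > 0" and TT: "\<And>t. t > 0 \<Longrightarrow> t < T \<Longrightarrow> \<forall>C\<in>{C. C facet_of P}. x \<notin> C \<longrightarrow> t * (\<alpha> C \<bullet> y) < \<beta> C - \<alpha> C \<bullet> x"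
    unfolding eventually_at_right_field by blast
  show ?thesis
  proof (intro exI[of _ T] conjI allI impI)
    fix t assume t: "0 < t" "t < T"
    have "t *\<^sub>R y \<in> L" by (rule subspace_scale[OF Lsub x(2)])
    moreover have "x \<in> affine hull P" by (rule hull_inc[OF x(1)])
    ultimately have "x + t *\<^sub>R y \<in> affine hull P" by (rule aff2[rotated])
    moreover have "\<alpha> C \<bullet> (x + t *\<^sub>R y) \<le> \<beta> C" if C: "C facet_of P" for C
    proof (cases "x \<in> C")
      case True
      then have "\<alpha> C \<bullet> x = \<beta> C" using onfacet[OF C x(1)] by blast
      moreover have "t * (\<alpha> C \<bullet> y) \<le> 0" using cond[OF C True] t by (simp add: mult_nonneg_nonpos)
      ultimately show ?thesis by (simp add: inner_add_right)
    next
      case False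
      have "t * (\<alpha> C \<bullet> y) < \<beta> C - \<alpha> C \<bullet> x" using TT[OF t] C False by blast
      then show ?thesis by (simp add: inner_add_right)
    qed
    ultimately show "x + t *\<^sub>R y \<in> P" using repr by blast
  qed (rule T)
qed

lemma extP: "v extreme_point_of P \<Longrightarrow> v \<in> P"
  by (simp add: extreme_point_of_def)

lemma span_act:
  assumes v: "v extreme_point_of P"
  shows "span (\<alpha> ` act v) = L"
proof -
  have sub: "span (\<alpha> ` act v) \<subseteq> L" by (rule span_minimal) (auto simp: act_def \<alpha>L Lsub)
  show ?thesis
  proof (rule ccontr)
    assume ne: "span (\<alpha> ` act v) \<noteq> L"
    have "span (\<alpha> ` act v) \<subset> span L" unfolding LspanL using sub ne by auto
    then obtain y where y: "y \<noteq> 0" "y \<in> span L" "\<And>z. z \<in> span (\<alpha> ` act v) \<Longrightarrow> orthogonal y z"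
      by (rule orthogonal_to_subspace_exists_gen) auto
    have yL: "y \<in> L" using y LspanL by simp
    have orth: "\<alpha> C \<bullet> y = 0" if "C \<in> act v" for C
      using y(3)[OF span_base[OF imageI[OF that]]] by (simp add: orthogonal_def inner_commute)
    have vP: "v \<in> P" using extP v .
    have c1: "\<And>C. C facet_of P \<Longrightarrow> v \<in> C \<Longrightarrow> \<alpha> C \<bullet> y \<le> 0"
      using orth by (simp add: act_def)
    have c2: "\<And>C. C facet_of P \<Longrightarrow> v \<in> C \<Longrightarrow> \<alpha> C \<bullet> (- y) \<le> 0"
      using orth by (simp add: act_def)
    obtain T1 where T1: "T1 > 0" "\<forall>t. 0 < t \<longrightarrow> t < T1 \<longrightarrow> v + t *\<^sub>R y \<in> P"
      using feasible[OF vP yL c1] by blast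
    obtain T2 where T2: "T2 > 0" "\<forall>t. 0 < t \<longrightarrow> t < T2 \<longrightarrow> v + t *\<^sub>R (- y) \<in> P"
      using feasible[OF vP subspace_neg[OF Lsub yL] c2] by blast
    define t where "t = min T1 T2 / 2"
    have t: "0 < t" "t < T1" "t < T2" using T1 T2 by (auto simp: t_def)
    have p: "v + t *\<^sub>R y \<in> P" and q: "v + t *\<^sub>R (- y) \<in> P" using T1 T2 t by auto
    have "v = midpoint (v + t *\<^sub>R y) (v + t *\<^sub>R (- y))"
      by (simp add: midpoint_def algebra_simps flip: scaleR_add_left)
    moreover have "v + t *\<^sub>R y \<noteq> v + t *\<^sub>R (- y)" using y(1) t(1) by (auto simp: algebra_simps simp flip: scaleR_2)
    ultimately have "v \<in> open_segment (v + t *\<^sub>R y) (v + t *\<^sub>R (- y))"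
      by (metis midpoint_in_open_segment)
    with v p q show False by (auto simp: extreme_point_of_def)
  qed
qed

lemma dual:
  assumes v: "v extreme_point_of P" and g: "g \<in> act v"
  shows "\<exists>y\<in>L. (\<forall>C\<in>act v - {g}. \<alpha> C \<bullet> y = 0) \<and> \<alpha> g \<bullet> y < 0"
proof -
  have notin: "\<alpha> g \<notin> span (\<alpha> ` (act v - {g}))"
  proof
    assume a: "\<alpha> g \<in> span (\<alpha> ` (act v - {g}))"
    have "\<alpha> ` act v \<subseteq> span (\<alpha> ` (act v - {g}))"
    proof
      fix z assume "z \<in> \<alpha> ` act v"
      then obtain C where C: "C \<in> act v" "z = \<alpha> C" by blast
      show "z \<in> span (\<alpha> ` (act v - {g}))"
      proof (cases "C = g")
        case True then show ?thesis using a C by simp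
      next
        case False then show ?thesis using C by (intro span_base) blast
      qed
    qed
    then have "span (\<alpha> ` act v) \<subseteq> span (\<alpha> ` (act v - {g}))"
      by (rule span_minimal) simp
    then have "L \<subseteq> span (\<alpha> ` (act v - {g}))" using span_act[OF v] by simp
    then have "dim L \<le> card (\<alpha> ` (act v - {g}))" by (rule dim_le_card) (simp add: finact)
    also have "\<dots> \<le> card (act v - {g})" by (rule card_image_le) (simp add: finact)
    also have "\<dots> = d - 1" using card_act[OF v] g finact by simp
    finally show False using dimL dpos by simp
  qed
  have gL: "\<alpha> g \<in> L" using g \<alpha>L by (auto simp: act_def)
  have "span (\<alpha> ` (act v - {g})) \<subseteq> L" by (rule span_minimal) (auto simp: act_def \<alpha>L Lsub)
  then have "span (\<alpha> ` (act v - {g})) \<subset> span L" unfolding LspanL using notin gL by auto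
  then obtain y where y: "y \<noteq> 0" "y \<in> span L" "\<And>z. z \<in> span (\<alpha> ` (act v - {g})) \<Longrightarrow> orthogonal y z"
    by (rule orthogonal_to_subspace_exists_gen) auto
  have yL: "y \<in> L" using y LspanL by simp
  have orth: "\<alpha> C \<bullet> y = 0" if "C \<in> act v - {g}" for C
    using y(3)[OF span_base[OF imageI[OF that]]] by (simp add: orthogonal_def inner_commute)
  have nz: "\<alpha> g \<bullet> y \<noteq> 0"
  proof
    assume "\<alpha> g \<bullet> y = 0"
    then have "\<alpha> ` act v \<subseteq> {z. orthogonal y z}" using orth by (force simp: orthogonal_def inner_commute)
    then have "span (\<alpha> ` act v) \<subseteq> {z. orthogonal y z}"
      by (rule span_minimal) (rule subspace_orthogonal_to_vector)
    then have "orthogonal y y" using span_act[OF v] yL by auto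
    then show False using y(1) by (simp add: orthogonal_def)
  qed
  show ?thesis
  proof (cases "\<alpha> g \<bullet> y < 0")
    case True then show ?thesis using yL orth by blast
  next
    case False
    then have "\<alpha> g \<bullet> (- y) < 0" using nz by simp
    then show ?thesis using subspace_neg[OF Lsub yL] orth by (intro bexI[of _ "-y"]) auto
  qed
qed

end


context spx begin

lemma face_inter: "S \<subseteq> {C. C facet_of P} \<Longrightarrow> (P \<inter> \<Inter>S) face_of P"
proof -
  assume S: "S \<subseteq> {C. C facet_of P}"
  have "P \<inter> \<Inter>S = \<Inter>(insert P S)" by auto
  moreover have "\<Inter>(insert P S) face_of P"
    by (rule face_of_Inter) (use S face_of_refl polytope_imp_convex[OF poly] facet_of_imp_face_of in auto)
  ultimately show ?thesis by simp
qed

lemma vertex_in: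
  assumes S: "S \<subseteq> {C. C facet_of P}" and ne: "P \<inter> \<Inter>S \<noteq> {}"
  shows "\<exists>v. v extreme_point_of P \<and> v \<in> P \<inter> \<Inter>S"
proof -
  have G: "(P \<inter> \<Inter>S) face_of P" using face_inter[OF S] .
  have cvx: "convex P" "compact P" using poly polytope_imp_convex polytope_imp_compact by auto
  have "compact (P \<inter> \<Inter>S)" using face_of_imp_compact[OF cvx G] .
  moreover have "convex (P \<inter> \<Inter>S)" using face_of_imp_convex[OF G] .
  ultimately obtain v where "v extreme_point_of (P \<inter> \<Inter>S)"
    using extreme_point_exists_convex ne by blast
  then show ?thesis using extreme_point_of_face[OF G] by blast
qed

lemma keyA:
  assumes S: "S \<subseteq> {C. C facet_of P}" and ne: "P \<inter> \<Inter>S \<noteq> {}"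
    and b: "b facet_of P" and sub: "P \<inter> \<Inter>S \<subseteq> b"
  shows "b \<in> S"
proof (rule ccontr)
  assume bS: "b \<notin> S"
  obtain v where v: "v extreme_point_of P" "v \<in> P \<inter> \<Inter>S" using vertex_in[OF S ne] by blast
  have vP: "v \<in> P" using v by blast
  have bact: "b \<in> act v" using v sub b by (auto simp: act_def)
  obtain y where y: "y \<in> L" "\<And>C. C \<in> act v - {b} \<Longrightarrow> \<alpha> C \<bullet> y = 0" "\<alpha> b \<bullet> y < 0"
    using dual[OF v(1) bact] by blast
  have "\<alpha> C \<bullet> y \<le> 0" if "C facet_of P" "v \<in> C" for C
    using y that by (cases "C = b") (auto simp: act_def)
  then obtain T where T: "T > 0" "\<forall>t. 0 < t \<longrightarrow> t < T \<longrightarrow> v + t *\<^sub>R y \<in> P"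
    using feasible[OF vP y(1)] by blast
  define x where "x = v + (T/2) *\<^sub>R y"
  have xP: "x \<in> P" using T by (simp add: x_def)
  have "x \<in> C" if "C \<in> S" for C
  proof -
    have C: "C facet_of P" using that S by blast
    have "C \<in> act v - {b}" using that v bS C by (auto simp: act_def)
    then have "\<alpha> C \<bullet> y = 0" using y by blast
    moreover have "\<alpha> C \<bullet> v = \<beta> C" using onfacet[OF C vP] v that by blast
    ultimately have "\<alpha> C \<bullet> x = \<beta> C" by (simp add: x_def inner_add_right)
    then show ?thesis using onfacet[OF C xP] by blast
  qed
  then have "x \<in> b" using xP sub by blast
  then have "\<alpha> b \<bullet> x = \<beta> b" using onfacet[OF b xP] by blast
  moreover have "\<alpha> b \<bullet> v = \<beta> b" using onfacet[OF b vP] bact by (auto simp: act_def)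
  moreover have "(T/2) * (\<alpha> b \<bullet> y) < 0" using T y(3) by (simp add: mult_pos_neg)
  moreover have "\<alpha> b \<bullet> x = \<alpha> b \<bullet> v + (T/2) * (\<alpha> b \<bullet> y)" by (simp add: x_def inner_add_right)
  ultimately show False by linarith
qed

lemma card_bound:
  assumes S: "S \<subseteq> {C. C facet_of P}" and s: "s \<in> S" and ne: "P \<inter> \<Inter>(S - {s}) \<noteq> {}"
  shows "card S \<le> d + 1"
proof -
  have S': "S - {s} \<subseteq> {C. C facet_of P}" using S by blast
  obtain v where v: "v extreme_point_of P" "v \<in> P \<inter> \<Inter>(S - {s})" using vertex_in[OF S' ne] by blast
  have "S - {s} \<subseteq> act v" using v S by (auto simp: act_def)
  then have "card (S - {s}) \<le> card (act v)" by (rule card_mono[OF finact])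
  then have "card (S - {s}) \<le> d" using card_act[OF v(1)] by simp
  moreover have "finite S" using S finF rev_finite_subset by blast
  ultimately show ?thesis using s by (simp add: card_Diff_singleton)
qed

lemma empty_all: "P \<inter> \<Inter>{C. C facet_of P} = {}"
proof (rule ccontr)
  assume ne: "P \<inter> \<Inter>{C. C facet_of P} \<noteq> {}"
  obtain v where v: "v extreme_point_of P" "v \<in> P \<inter> \<Inter>{C. C facet_of P}"
    using vertex_in[OF order_refl ne] by blast
  have vP: "v \<in> P" using v by blast
  have actall: "act v = {C. C facet_of P}" using v by (auto simp: act_def)
  have "act v \<noteq> {}" using card_act[OF v(1)] dpos by auto
  then obtain g where g: "g \<in> act v" by blast
  obtain y where y: "y \<in> L" "\<And>C. C \<in> act v - {g} \<Longrightarrow> \<alpha> C \<bullet> y = 0" "\<alpha> g \<bullet> y < 0"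
    using dual[OF v(1) g] by blast
  have yle: "\<alpha> C \<bullet> y \<le> 0" if "C facet_of P" for C
    using y that actall by (cases "C = g") auto
  have inP: "v + t *\<^sub>R y \<in> P" if "t \<ge> 0" for t
  proof -
    have "v + t *\<^sub>R y \<in> affine hull P"
      by (rule aff2[OF hull_inc[OF vP] subspace_scale[OF Lsub y(1)]])
    moreover have "\<alpha> C \<bullet> (v + t *\<^sub>R y) \<le> \<beta> C" if C: "C facet_of P" for C
    proof -
      have "\<alpha> C \<bullet> v = \<beta> C" using onfacet[OF C vP] v C by blast
      moreover have "t * (\<alpha> C \<bullet> y) \<le> 0" using yle[OF C] \<open>t \<ge> 0\<close> by (simp add: mult_nonneg_nonpos)
      ultimately show ?thesis by (simp add: inner_add_right)
    qed
    ultimately show ?thesis using repr by blast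
  qed
  have "bounded P" using poly polytope_imp_bounded by blast
  then obtain B where B: "\<And>x. x \<in> P \<Longrightarrow> norm x \<le> B" by (auto simp: bounded_iff)
  have ynz: "y \<noteq> 0" using y(3) by auto
  define t where "t = (B + norm v + 1) / norm y"
  have "norm v \<le> B" using B vP by blast
  then have "0 \<le> B" using norm_ge_zero[of v] by linarith
  then have t0: "t \<ge> 0" by (simp add: t_def)
  have "norm (t *\<^sub>R y) = B + norm v + 1" using ynz \<open>0 \<le> B\<close> by (simp add: t_def)
  moreover have "norm (t *\<^sub>R y) \<le> norm (v + t *\<^sub>R y) + norm v"
    using norm_triangle_ineq4[of "v + t *\<^sub>R y" v] by simp
  moreover have "norm (v + t *\<^sub>R y) \<le> B" using B inP[OF t0] by blast
  ultimately show False by linarith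
qed

end


context spx begin

lemma simplex:
  assumes S: "S \<subseteq> {C. C facet_of P}" and emp: "P \<inter> \<Inter>S = {}"
    and mini: "\<And>s. s \<in> S \<Longrightarrow> P \<inter> \<Inter>(S - {s}) \<noteq> {}" and cardS: "card S = d + 1"
    and C: "C facet_of P"
  shows "C \<in> S"
proof -
  have finS: "finite S" using S finF rev_finite_subset by blast
  have convP: "convex P" using poly polytope_imp_convex by blast
  have "\<forall>s\<in>S. \<exists>v. v extreme_point_of P \<and> v \<in> P \<inter> \<Inter>(S - {s})"
  proof
    fix s assume s: "s \<in> S"
    have "S - {s} \<subseteq> {C. C facet_of P}" using S by blast
    from vertex_in[OF this mini[OF s]] show "\<exists>v. v extreme_point_of P \<and> v \<in> P \<inter> \<Inter>(S - {s})" .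
  qed
  then obtain vs where vs: "\<And>s. s \<in> S \<Longrightarrow> vs s extreme_point_of P \<and> vs s \<in> P \<inter> \<Inter>(S - {s})"
    by metis
  have vsP: "vs s \<in> P" if "s \<in> S" for s using vs[OF that] by blast
  have actvs: "act (vs s) = S - {s}" if s: "s \<in> S" for s
  proof -
    have sub: "S - {s} \<subseteq> act (vs s)" using vs[OF s] S by (auto simp: act_def)
    have "card (S - {s}) = d" using cardS finS s by simp
    then have "card (S - {s}) = card (act (vs s))" using card_act vs[OF s] by simp
    then show ?thesis using card_subset_eq[OF finact sub] by simp
  qed
  have vC: "\<alpha> C' \<bullet> vs s = \<beta> C'" if "s \<in> S" "C' \<in> S" "C' \<noteq> s" for s C'
  proof -
    have "vs s \<in> C'" using vs[OF that(1)] that by blast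
    moreover have "C' facet_of P" using S that by blast
    ultimately show ?thesis using onfacet vsP[OF that(1)] by blast
  qed
  have slack: "\<alpha> s \<bullet> vs s < \<beta> s" if s: "s \<in> S" for s
  proof -
    have Cs: "s facet_of P" using S s by blast
    have "\<alpha> s \<bullet> vs s \<le> \<beta> s" using inP_le[OF vsP[OF s] Cs] .
    moreover have "\<alpha> s \<bullet> vs s \<noteq> \<beta> s"
    proof
      assume "\<alpha> s \<bullet> vs s = \<beta> s"
      then have "vs s \<in> s" using onfacet[OF Cs vsP[OF s]] by blast
      then have "vs s \<in> P \<inter> \<Inter>S" using vs[OF s] by blast
      then show False using emp by blast
    qed
    ultimately show ?thesis by simp
  qed
  have "S \<noteq> {}" using cardS by auto
  then obtain s0 where s0: "s0 \<in> S" by blast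
  define T where "T = S - {s0}"
  have finT: "finite T" using finS by (simp add: T_def)
  have spanT: "span (\<alpha> ` T) = L" using span_act[of "vs s0"] actvs[OF s0] vs[OF s0] by (simp add: T_def)
  have cardT: "card T = d" using cardS finS s0 by (simp add: T_def)
  have injT: "inj_on \<alpha> T"
  proof -
    have "L \<subseteq> span (\<alpha> ` T)" using spanT by simp
    then have "dim L \<le> card (\<alpha> ` T)" by (rule dim_le_card) (simp add: finT)
    moreover have "card (\<alpha> ` T) \<le> card T" by (rule card_image_le[OF finT])
    ultimately have "card (\<alpha> ` T) = card T" using dimL cardT by simp
    then show ?thesis using eq_card_imp_inj_on finT by blast
  qed
  have "\<alpha> s0 \<in> L" using \<alpha>L S s0 by blast
  then have "\<alpha> s0 \<in> span (\<alpha> ` T)" using spanT by simp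
  then obtain u where u: "\<alpha> s0 = (\<Sum>w\<in>\<alpha> ` T. u w *\<^sub>R w)"
    using span_finite[of "\<alpha> ` T"] finT by auto
  then have u2: "\<alpha> s0 = (\<Sum>C\<in>T. u (\<alpha> C) *\<^sub>R \<alpha> C)"
    using sum.reindex[OF injT, of "\<lambda>w. u w *\<^sub>R w"] by simp
  define lam where "lam C = (if C = s0 then -1 else u (\<alpha> C))" for C
  have lin0: "(\<Sum>C\<in>S. lam C *\<^sub>R \<alpha> C) = 0"
  proof -
    have "(\<Sum>C\<in>S. lam C *\<^sub>R \<alpha> C) = lam s0 *\<^sub>R \<alpha> s0 + (\<Sum>C\<in>T. lam C *\<^sub>R \<alpha> C)"
      unfolding T_def by (rule sum.remove[OF finS s0])
    also have "(\<Sum>C\<in>T. lam C *\<^sub>R \<alpha> C) = (\<Sum>C\<in>T. u (\<alpha> C) *\<^sub>R \<alpha> C)"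
      by (rule sum.cong) (auto simp: lam_def T_def)
    finally show ?thesis using u2 by (simp add: lam_def)
  qed
  have linx: "(\<Sum>C\<in>S. lam C * (\<alpha> C \<bullet> x)) = 0" for x
  proof -
    have "0 = (\<Sum>C\<in>S. lam C *\<^sub>R \<alpha> C) \<bullet> x" using lin0 by simp
    also have "\<dots> = (\<Sum>C\<in>S. lam C * (\<alpha> C \<bullet> x))" by (simp add: inner_sum_left)
    finally show ?thesis by simp
  qed
  define c where "c = (\<Sum>C\<in>S. lam C * \<beta> C)"
  have slackid: "(\<Sum>C\<in>S. lam C * (\<beta> C - \<alpha> C \<bullet> x)) = c" for x
    using linx[of x] by (simp add: right_diff_distrib sum_subtractf c_def)
  have atv: "lam s * (\<beta> s - \<alpha> s \<bullet> vs s) = c" if s: "s \<in> S" for s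
  proof -
    have "c = (\<Sum>C\<in>S. lam C * (\<beta> C - \<alpha> C \<bullet> vs s))" using slackid by simp
    also have "\<dots> = lam s * (\<beta> s - \<alpha> s \<bullet> vs s) + (\<Sum>C\<in>S - {s}. lam C * (\<beta> C - \<alpha> C \<bullet> vs s))"
      by (rule sum.remove[OF finS s])
    also have "(\<Sum>C\<in>S - {s}. lam C * (\<beta> C - \<alpha> C \<bullet> vs s)) = 0"
      by (rule sum.neutral) (use vC s in auto)
    finally show ?thesis by simp
  qed
  have cneg: "c < 0" using atv[OF s0] slack[OF s0] by (simp add: lam_def)
  have lamneg: "lam s < 0" if s: "s \<in> S" for s
  proof (rule ccontr)
    assume "\<not> lam s < 0"
    then have "0 \<le> lam s * (\<beta> s - \<alpha> s \<bullet> vs s)" using slack[OF s] by simp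
    then show False using atv[OF s] cneg by simp
  qed
  have convx: "x \<in> convex hull (vs ` S)" if x: "x \<in> P" for x
  proof -
    define mu where "mu s = lam s * (\<beta> s - \<alpha> s \<bullet> x) / c" for s
    have mu_nonneg: "0 \<le> mu s" if s: "s \<in> S" for s
    proof -
      have "0 \<le> \<beta> s - \<alpha> s \<bullet> x" using inP_le[OF x] S s by force
      then have "lam s * (\<beta> s - \<alpha> s \<bullet> x) \<le> 0"
        using lamneg[OF s] by (simp add: mult_nonpos_nonneg)
      then show ?thesis unfolding mu_def using cneg by (simp add: divide_nonpos_neg)
    qed
    have mu_sum: "sum mu S = 1"
      unfolding mu_def using slackid[of x] cneg by (simp flip: sum_divide_distrib)
    define z where "z = (\<Sum>s\<in>S. mu s *\<^sub>R vs s)"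
    have zP: "z \<in> P" unfolding z_def
      by (rule convex_sum[OF finS convP mu_sum mu_nonneg vsP])
    have eqC: "\<alpha> C' \<bullet> z = \<alpha> C' \<bullet> x" if C': "C' \<in> T" for C'
    proof -
      have C'S: "C' \<in> S" and C's0: "C' \<noteq> s0" using C' by (auto simp: T_def)
      define sg where "sg = \<beta> C' - \<alpha> C' \<bullet> vs C'"
      have "\<alpha> C' \<bullet> z = (\<Sum>s\<in>S. mu s * (\<alpha> C' \<bullet> vs s))"
        by (simp add: z_def inner_sum_right)
      also have "\<dots> = (\<Sum>s\<in>S. mu s * \<beta> C' - (if s = C' then mu s * sg else 0))"
      proof (rule sum.cong)
        fix s assume s: "s \<in> S"
        show "mu s * (\<alpha> C' \<bullet> vs s) = mu s * \<beta> C' - (if s = C' then mu s * sg else 0)"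
        proof (cases "s = C'")
          case True then show ?thesis by (simp add: sg_def algebra_simps)
        next
          case False then show ?thesis using vC[OF s C'S] by simp
        qed
      qed simp
      also have "\<dots> = \<beta> C' * sum mu S - mu C' * sg"
      proof -
        have "(\<Sum>s\<in>S. mu s * \<beta> C' - (if s = C' then mu s * sg else 0))
            = (\<Sum>s\<in>S. mu s * \<beta> C') - (\<Sum>s\<in>S. (if s = C' then mu s * sg else 0))"
          by (rule sum_subtractf)
        also have "(\<Sum>s\<in>S. mu s * \<beta> C') = \<beta> C' * sum mu S"
          by (simp add: sum_distrib_left mult.commute)
        also have "(\<Sum>s\<in>S. (if s = C' then mu s * sg else 0)) = mu C' * sg"
          using C'S finS by (simp add: sum.delta)
        finally show ?thesis .
      qed
      also have "mu C' * sg = \<beta> C' - \<alpha> C' \<bullet> x"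
      proof -
        have "mu C' * sg = (lam C' * sg) * (\<beta> C' - \<alpha> C' \<bullet> x) / c"
          by (simp add: mu_def)
        also have "lam C' * sg = c" using atv[OF C'S] by (simp add: sg_def)
        finally show ?thesis using cneg by simp
      qed
      finally show ?thesis using mu_sum by simp
    qed
    have xzL: "x - z \<in> L" by (rule aff1[OF hull_inc[OF x] hull_inc[OF zP]])
    have "\<alpha> ` T \<subseteq> {w. orthogonal (x - z) w}"
    proof
      fix w assume "w \<in> \<alpha> ` T"
      then obtain C' where "C' \<in> T" "w = \<alpha> C'" by blast
      then show "w \<in> {w. orthogonal (x - z) w}"
        using eqC[of C'] by (simp add: orthogonal_def inner_diff_right inner_commute)
    qed
    then have "span (\<alpha> ` T) \<subseteq> {w. orthogonal (x - z) w}"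
      by (rule span_minimal) (rule subspace_orthogonal_to_vector)
    then have "orthogonal (x - z) (x - z)" using spanT xzL by auto
    then have "x = z" by (simp add: orthogonal_def)
    moreover have "z \<in> convex hull (vs ` S)" unfolding z_def
      by (rule convex_sum[OF finS convex_convex_hull mu_sum mu_nonneg]) (auto intro: hull_inc)
    ultimately show ?thesis by simp
  qed
  have hulleq: "convex hull (vs ` S) = P"
  proof
    show "convex hull (vs ` S) \<subseteq> P"
      by (rule hull_minimal) (use vsP convP in auto)
    show "P \<subseteq> convex hull (vs ` S)" using convx by blast
  qed
  have Cface: "C face_of P" and Cne: "C \<noteq> {}" using C by (auto simp: facet_of_def)
  have "compact C" using face_of_imp_compact[OF convP _ Cface] poly polytope_imp_compact by blast
  moreover have "convex C" using face_of_imp_convex[OF Cface] .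
  ultimately obtain e where "e extreme_point_of C" using extreme_point_exists_convex Cne by blast
  then have e: "e extreme_point_of P" "e \<in> C" using extreme_point_of_face[OF Cface] by auto
  then have "e extreme_point_of convex hull (vs ` S)" using hulleq by simp
  then have "e \<in> vs ` S" by (rule extreme_point_of_convex_hull)
  then obtain s where s: "s \<in> S" "e = vs s" by blast
  have "C \<in> act (vs s)" using e C s by (auto simp: act_def)
  then show ?thesis using actvs[OF s(1)] by blast
qed

end


locale wordrel =
  fixes R :: "('g list \<times> 'g list) set" and A :: "'g set"
  assumes idem: "\<And>a. a \<in> A \<Longrightarrow> mon_cong R [a, a] [a]"
    and comm: "\<And>a b. a \<in> A \<Longrightarrow> b \<in> A \<Longrightarrow> mon_cong R [a, b] [b, a]"
begin

lemma cpre: "mon_cong R u v \<Longrightarrow> mon_cong R (x @ u) (x @ v)"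
  using mon_cong.compat[of R u v x "[]"] by simp

lemma csuf: "mon_cong R u v \<Longrightarrow> mon_cong R (u @ y) (v @ y)"
  using mon_cong.compat[of R u v "[]" y] by simp

lemma swap1: "a \<in> A \<Longrightarrow> set v \<subseteq> A \<Longrightarrow> mon_cong R (a # v) (v @ [a])"
proof (induction v)
  case Nil then show ?case by (simp add: mon_cong.refl)
next
  case (Cons b v)
  have 1: "mon_cong R (a # b # v) (b # a # v)"
    using csuf[OF comm[of a b], of v] Cons.prems by simp
  have 2: "mon_cong R (b # a # v) (b # (v @ [a]))"
    using cpre[OF Cons.IH, of "[b]"] Cons.prems by simp
  show ?case using mon_cong.trans[OF 1 2] by simp
qed

lemma swapall: "set u \<subseteq> A \<Longrightarrow> set v \<subseteq> A \<Longrightarrow> mon_cong R (u @ v) (v @ u)"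
proof (induction u)
  case Nil then show ?case by (simp add: mon_cong.refl)
next
  case (Cons a u)
  have 1: "mon_cong R (a # (u @ v)) (a # (v @ u))"
    using cpre[OF Cons.IH, of "[a]"] Cons.prems by simp
  have 2: "mon_cong R (a # (v @ u)) (v @ (a # u))"
    using csuf[OF swap1, of a v u] Cons.prems by simp
  show ?case using mon_cong.trans[OF 1 2] by simp
qed

lemma absorb1: "set u \<subseteq> A \<Longrightarrow> a \<in> set u \<Longrightarrow> mon_cong R u (u @ [a])"
proof (induction u)
  case Nil then show ?case by simp
next
  case (Cons x u)
  show ?case
  proof (cases "a = x")
    case True
    have 1: "mon_cong R (x # x # u) (x # u)" using csuf[OF idem, of x u] Cons.prems by simp
    have 2: "mon_cong R (x # x # u) (x # (u @ [x]))"
      using cpre[OF swap1[of x u], of "[x]"] Cons.prems by simp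
    show ?thesis using mon_cong.trans[OF mon_cong.sym[OF 1] 2] True by simp
  next
    case False
    then have "a \<in> set u" using Cons.prems by simp
    then show ?thesis using cpre[OF Cons.IH, of "[x]"] Cons.prems by simp
  qed
qed

lemma absorb: "set u \<subseteq> A \<Longrightarrow> set v \<subseteq> set u \<Longrightarrow> mon_cong R u (u @ v)"
proof (induction v rule: rev_induct)
  case Nil then show ?case by (simp add: mon_cong.refl)
next
  case (snoc a v)
  have 1: "mon_cong R u (u @ v)" using snoc by simp
  have 2: "mon_cong R (u @ v) ((u @ v) @ [a])"
    by (rule absorb1) (use snoc.prems in auto)
  show ?case using mon_cong.trans[OF 1 2] by simp
qed

lemma sameset: "set u \<subseteq> A \<Longrightarrow> set u = set v \<Longrightarrow> mon_cong R u v"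
proof -
  assume a: "set u \<subseteq> A" "set u = set v"
  have 1: "mon_cong R u (u @ v)" using absorb a by simp
  have 2: "mon_cong R (u @ v) (v @ u)" using swapall a by simp
  have 3: "mon_cong R (v @ u) v" using mon_cong.sym[OF absorb[of v u]] a by simp
  show ?thesis using mon_cong.trans[OF mon_cong.trans[OF 1 2] 3] .
qed

end

lemma facet_wordrel: "wordrel (facet_relations P) (facets P)"
  by unfold_locales (auto simp: facet_relations_def intro: mon_cong.base)

lemma sound:
  "mon_cong (facet_relations P) u v \<Longrightarrow> P \<inter> \<Inter>(set u) = P \<inter> \<Inter>(set v)"
proof (induction rule: mon_cong.induct)
  case (base u v)
  then show ?case unfolding facet_relations_def by auto
next
  case (compat u v x y)
  then show ?case by (simp add: Inter_Un_distrib) blast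
qed auto

context spx begin

lemma keyW:
  assumes ad: "aff_dim P = int d" and u: "set u \<subseteq> {C. C facet_of P}" and b: "b facet_of P"
    and sub: "P \<inter> \<Inter>(set u) \<subseteq> b"
  shows "mon_cong (facet_relations P) u (u @ [b])"
proof -
  interpret wordrel "facet_relations P" "facets P" by (rule facet_wordrel)
  have uA: "set u \<subseteq> facets P" using u by (simp add: facets_def)
  show ?thesis
  proof (cases "P \<inter> \<Inter>(set u) = {}")
    case False
    then have "b \<in> set u" using keyA[OF u False b sub] by simp
    then show ?thesis using absorb1 uA by blast
  next
    case True
    define S where "S = set u"
    have finS: "finite S" by (simp add: S_def)
    obtain S' where S': "S' \<subseteq> S \<and> P \<inter> \<Inter>S' = {}"
      and least: "\<And>T. T \<subseteq> S \<and> P \<inter> \<Inter>T = {} \<Longrightarrow> card S' \<le> card T"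
      using ex_has_least_nat[of "\<lambda>T. T \<subseteq> S \<and> P \<inter> \<Inter>T = {}" S card] True S_def by blast
    have finS': "finite S'" using S' finS rev_finite_subset by blast
    have S'F: "S' \<subseteq> {C. C facet_of P}" using S' u S_def by blast
    have mini: "P \<inter> \<Inter>(S' - {s}) \<noteq> {}" if s: "s \<in> S'" for s
    proof
      assume "P \<inter> \<Inter>(S' - {s}) = {}"
      then have "card S' \<le> card (S' - {s})" using least[of "S' - {s}"] S' by blast
      moreover have "card (S' - {s}) = card S' - 1" using finS' s by (simp add: card_Diff_singleton)
      moreover have "card S' > 0" using finS' s card_gt_0_iff by blast
      ultimately show False by linarith
    qed
    have Pne: "P \<noteq> {}" using ad by auto
    have S'ne: "S' \<noteq> {}" using S' Pne by auto
    have S'1: "card S' \<noteq> 1"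
    proof
      assume "card S' = 1"
      then obtain c where c: "S' = {c}" by (auto simp: card_Suc_eq)
      then have "c facet_of P" using S'F by blast
      then have "c \<noteq> {}" "c \<subseteq> P" by (auto simp: facet_of_def face_of_imp_subset)
      then show False using S' c by auto
    qed
    have "card S' \<noteq> 0" using S'ne finS' by simp
    then have card2: "2 \<le> card S'" using S'1 by linarith
    obtain s where s: "s \<in> S'" using S'ne by blast
    have cb: "card S' \<le> d + 1" using card_bound[OF S'F s mini[OF s]] .
    show ?thesis
    proof (cases "card S' = d + 1")
      case True
      have "b \<in> S'" using simplex[OF S'F _ mini True b] S' by blast
      then have "b \<in> set u" using S' S_def by blast
      then show ?thesis using absorb1 uA by blast
    next
      case False
      then have cd: "card S' \<le> d" using cb by simp
      obtain as where as: "set as = S'" "distinct as" using finite_distinct_list[OF finS'] by blast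
      have len: "length as = card S'" using distinct_card[OF as(2)] as(1) by simp
      have inter: "\<Inter>(set as) = {}"
      proof -
        have "\<Inter>S' \<subseteq> P" using S'ne S'F facet_of_imp_subset by blast
        then show ?thesis using S' as(1) by blast
      qed
      have asF: "set as \<subseteq> facets P" using as(1) S'F by (simp add: facets_def)
      have "\<forall>s\<in>set as. P \<inter> \<Inter>(set as - {s}) \<supset> P \<inter> \<Inter>(set as)"
      proof
        fix s assume "s \<in> set as"
        then have "P \<inter> \<Inter>(S' - {s}) \<noteq> {}" using mini as(1) by simp
        then show "P \<inter> \<Inter>(set as - {s}) \<supset> P \<inter> \<Inter>(set as)" using S' as(1) by blast
      qed
      then have indep: "independent_facets P (set as)"
        unfolding independent_facets_def using asF by simp
      have bF: "b \<in> facets P" using b by (simp add: facets_def)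
      have c2: "2 \<le> length as" and c3: "int (length as) \<le> aff_dim P" using card2 cd len ad by simp_all
      have "(as, as @ [b]) \<in> {(as, as @ [b]) | as b. b \<in> facets P \<and> distinct as \<and> set as \<subseteq> facets P \<and>
        independent_facets P (set as) \<and> 2 \<le> length as \<and> int (length as) \<le> aff_dim P \<and>
        \<Inter>(set as) = {}}"
        using bF as(2) asF indep c2 c3 inter by blast
      then have "(as, as @ [b]) \<in> facet_relations P"
        unfolding facet_relations_def by (rule UnI2)
      then have r: "mon_cong (facet_relations P) as (as @ [b])" by (rule mon_cong.base)
      have 1: "mon_cong (facet_relations P) u (as @ u)"
        by (rule sameset) (use uA as S' S_def in auto)
      have 2: "mon_cong (facet_relations P) (as @ u) ((as @ [b]) @ u)" by (rule csuf[OF r])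
      have 3: "mon_cong (facet_relations P) ((as @ [b]) @ u) (u @ [b])"
        by (rule sameset) (use uA as S' S_def b in \<open>auto simp: facets_def\<close>)
      show ?thesis using mon_cong.trans[OF mon_cong.trans[OF 1 2] 3] .
    qed
  qed
qed

lemma keyWs:
  assumes ad: "aff_dim P = int d" and u: "set u \<subseteq> {C. C facet_of P}" and v: "set v \<subseteq> {C. C facet_of P}"
    and sub: "P \<inter> \<Inter>(set u) \<subseteq> P \<inter> \<Inter>(set v)"
  shows "mon_cong (facet_relations P) u (u @ v)"
  using v sub
proof (induction v rule: rev_induct)
  case Nil then show ?case by (simp add: mon_cong.refl)
next
  case (snoc b v)
  have 1: "mon_cong (facet_relations P) u (u @ v)" using snoc by auto
  have b: "b facet_of P" using snoc.prems by auto
  have bs: "P \<inter> \<Inter>(set (u @ v)) \<subseteq> b" using snoc.prems by auto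
  have uv: "set (u @ v) \<subseteq> {C. C facet_of P}" using u snoc.prems by auto
  have 2: "mon_cong (facet_relations P) (u @ v) ((u @ v) @ [b])"
    by (rule keyW[OF ad uv b bs])
  show ?case using mon_cong.trans[OF 1 2] by simp
qed

end


theorem proposition4:
  fixes P :: "'a::euclidean_space set"
  assumes "simple_polytope P" and "aff_dim P \<ge> 1"
  shows "has_presentation (face_monoid P) (\<inter>) P (facets P) id (facet_relations P)"
proof -
  have poly: "polytope P"
    and simp0: "\<And>v. v extreme_point_of P \<Longrightarrow> int (card {F. F facet_of P \<and> v \<in> F}) = aff_dim P"
    using assms(1) unfolding simple_polytope_def by auto
  define d where "d = nat (aff_dim P)"
  have ad: "aff_dim P = int d" using assms(2) by (simp add: d_def)
  have dpos: "1 \<le> d" using assms(2) ad by simp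
  have Pne: "P \<noteq> {}" using assms(2) by auto
  then obtain p0 where p0: "p0 \<in> P" by blast
  obtain \<alpha> \<beta> where r\<alpha>: "\<And>C. C facet_of P \<Longrightarrow> \<forall>x\<in>affine hull P. x + \<alpha> C \<in> affine hull P"
    and rrepr: "\<And>x. x \<in> P \<longleftrightarrow> x \<in> affine hull P \<and> (\<forall>C. C facet_of P \<longrightarrow> \<alpha> C \<bullet> x \<le> \<beta> C)"
    and rfac: "\<And>C. C facet_of P \<Longrightarrow> C = P \<inter> {x. \<alpha> C \<bullet> x = \<beta> C}"
    using facet_repr[OF poly] by blast
  define L where "L = span ((\<lambda>x. - p0 + x) ` P)"
  have Lsub: "subspace L" by (simp add: L_def)
  have affeq: "affine hull P = (\<lambda>x. p0 + x) ` L"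
  proof -
    have "(\<lambda>x. - p0 + x) ` P = insert 0 ((\<lambda>x. - p0 + x) ` (P - {p0}))" using p0 by auto
    then have "L = span ((\<lambda>x. - p0 + x) ` (P - {p0}))" by (simp add: L_def span_insert_0)
    then show ?thesis using affine_hull_span2[OF p0] by simp
  qed
  have affmem: "x \<in> affine hull P \<longleftrightarrow> - p0 + x \<in> L" for x
  proof
    assume "x \<in> affine hull P"
    then obtain l where "l \<in> L" "x = p0 + l" using affeq by blast
    then show "- p0 + x \<in> L" by simp
  next
    assume "- p0 + x \<in> L"
    then have "p0 + (- p0 + x) \<in> (\<lambda>x. p0 + x) ` L" by (rule imageI)
    then show "x \<in> affine hull P" using affeq by simp
  qed
  have dimL: "dim L = d"
  proof -
    have "aff_dim P = int (dim ((+) (- p0) ` P))" by (rule aff_dim_eq_dim[OF hull_inc[OF p0]])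
    then show ?thesis using ad by (simp add: L_def)
  qed
  have aff1: "x - z \<in> L" if "x \<in> affine hull P" "z \<in> affine hull P" for x z
  proof -
    have "(- p0 + x) - (- p0 + z) \<in> L" using subspace_diff[OF Lsub] that affmem by blast
    then show ?thesis by simp
  qed
  have aff2: "x + y \<in> affine hull P" if "x \<in> affine hull P" "y \<in> L" for x y
  proof -
    have "(- p0 + x) + y \<in> L" using subspace_add[OF Lsub] that affmem by blast
    moreover have "(- p0 + x) + y = - p0 + (x + y)" by (simp add: algebra_simps)
    ultimately have "- p0 + (x + y) \<in> L" by (simp add: diff_add_eq)
    then show ?thesis using affmem[of "x + y"] by blast
  qed
  have \<alpha>L: "\<alpha> C \<in> L" if "C facet_of P" for C
  proof -
    have "p0 + \<alpha> C \<in> affine hull P" using r\<alpha>[OF that] hull_inc[OF p0] by blast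
    then show ?thesis using affmem by simp
  qed
  have simple': "card {C. C facet_of P \<and> v \<in> C} = d" if "v extreme_point_of P" for v
    using simp0[OF that] ad by simp
  interpret spx P \<alpha> \<beta> L d
    by (rule spx.intro[OF poly simple' dpos Lsub dimL aff1 aff2 \<alpha>L rrepr rfac])
  interpret wordrel "facet_relations P" "facets P" by (rule facet_wordrel)
  have ev: "foldr (\<lambda>a x. id a \<inter> x) w P = P \<inter> \<Inter>(set w)" for w
    by (induct w) auto
  have lists_iff: "w \<in> lists (facets P) \<longleftrightarrow> set w \<subseteq> {C. C facet_of P}" for w
    by (auto simp: facets_def)
  have surj: "(\<lambda>w. P \<inter> \<Inter>(set w)) ` lists (facets P) = face_monoid P"
  proof
    show "(\<lambda>w. P \<inter> \<Inter>(set w)) ` lists (facets P) \<subseteq> face_monoid P"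
      using face_inter lists_iff by (auto simp: face_monoid_def)
  next
    show "face_monoid P \<subseteq> (\<lambda>w. P \<inter> \<Inter>(set w)) ` lists (facets P)"
    proof
      fix F assume "F \<in> face_monoid P"
      then have Ff: "F face_of P" by (simp add: face_monoid_def)
      show "F \<in> (\<lambda>w. P \<inter> \<Inter>(set w)) ` lists (facets P)"
      proof (cases "F = P")
        case True
        then show ?thesis by (intro image_eqI[of _ _ "[]"]) auto
      next
        case FP: False
        show ?thesis
        proof (cases "F = {}")
          case True
          obtain w where w: "set w = {C. C facet_of P}" using finite_list[OF finF] by blast
          then show ?thesis using empty_all True lists_iff by (intro image_eqI[of _ _ w]) auto
        next
          case False
          have fin: "finite {C. C facet_of P \<and> F \<subseteq> C}" using finF by (rule rev_finite_subset) auto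
          obtain w where w: "set w = {C. C facet_of P \<and> F \<subseteq> C}" using finite_list[OF fin] by blast
          have "F = \<Inter>{C. C facet_of P \<and> F \<subseteq> C}"
            by (rule face_of_polyhedron[OF polytope_imp_polyhedron[OF poly] Ff False FP])
          moreover have "F \<subseteq> P" using Ff face_of_imp_subset by blast
          ultimately have "F = P \<inter> \<Inter>(set w)" using w by auto
          moreover have "w \<in> lists (facets P)" using w lists_iff by auto
          ultimately show ?thesis by blast
        qed
      qed
    qed
  qed
  have kern: "P \<inter> \<Inter>(set u) = P \<inter> \<Inter>(set v) \<longleftrightarrow> mon_cong (facet_relations P) u v"
    if u: "u \<in> lists (facets P)" and v: "v \<in> lists (facets P)" for u v
  proof
    assume eq: "P \<inter> \<Inter>(set u) = P \<inter> \<Inter>(set v)"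
    have uF: "set u \<subseteq> {C. C facet_of P}" and vF: "set v \<subseteq> {C. C facet_of P}" using u v lists_iff by auto
    have 1: "mon_cong (facet_relations P) u (u @ v)" using keyWs[OF ad uF vF] eq by simp
    have 2: "mon_cong (facet_relations P) v (v @ u)" using keyWs[OF ad vF uF] eq by simp
    have uA: "set u \<subseteq> facets P" using uF by (simp add: facets_def)
    have vA: "set v \<subseteq> facets P" using vF by (simp add: facets_def)
    have 3: "mon_cong (facet_relations P) (u @ v) (v @ u)" by (rule swapall[OF uA vA])
    show "mon_cong (facet_relations P) u v"
      using mon_cong.trans[OF mon_cong.trans[OF 1 3] mon_cong.sym[OF 2]] .
  next
    assume "mon_cong (facet_relations P) u v"
    then show "P \<inter> \<Inter>(set u) = P \<inter> \<Inter>(set v)" by (rule sound)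
  qed
  show ?thesis
    unfolding has_presentation_def Let_def ev
  proof (intro conjI ballI)
    show "(\<lambda>w. P \<inter> \<Inter>(set w)) ` lists (facets P) = face_monoid P" by (rule surj)
  next
    fix u v assume "u \<in> lists (facets P)" "v \<in> lists (facets P)"
    then show "P \<inter> \<Inter>(set u) = P \<inter> \<Inter>(set v) \<longleftrightarrow> mon_cong (facet_relations P) u v"
      by (rule kern)
  qed
qed


end
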